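(* Let $Y\subset D_2(H)$ be the subgroup generated by all $T(a_i,a_j;a_k,a_l)$, all $⑦_{i,j,k,l}:=T(a_i,a_j;b_k,a_l)$ ($1\le i,j,k,l\le g$) and all $⑧_{i,j}:=a_i\odot a_j$ ($i\ne j$), and let $P:=\operatorname{Ker}(\operatorname{Tr}^{as}|_Y:Y\to\Lambda^2(H/2H))$ (the image lies in the span of the $a_i\wedge a_j$ mod 2). Then $P$ is generated by: all $T(a_i,a_j;a_k,a_l)$; all $⑦_{i,j,k,l}$ with $k\notin\{i,j,l\}$; all $⑦_{i,k,k,i}$ with $i\ne k$; and, for both choices of sign, the elements $$⑦_{i,k,k,m}\pm⑦_{m,k,k,i},\qquad ⑦_{i,k,k,l}\pm⑦_{i,k',k',l},\qquad ⑦_{i,k,k,l}\pm⑧_{i,l},$$ where $i\notin\{k,k',l\}$ and $m\ne k$.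
   Context: Let $g\ge 2$, $\Sigma_{g,1}$ a compact connected oriented surface of genus $g$ with one boundary component, $H=H_1(\Sigma_{g,1};\mathbb Z)$ with intersection form $\omega$, $\mathcal L(H)$ the free Lie ring on $H$ embedded in $T(H)$ via $[x,y]=x\otimes y-y\otimes x$, $D_2(H):=\ker(H\otimes\mathcal L_3(H)\to\mathcal L_4(H),\ h\otimes u\mapsto[h,u])$. Fix a symplectic basis $(a_1,\dots,a_g,b_1,\dots,b_g)$ of $H$ ($\omega(a_i,b_j)=\delta_{ij}$, $\omega(a_i,a_j)=\omega(b_i,b_j)=0$). For $a,b,c,d\in H$, $T(a,b;c,d):=a\otimes[b,[c,d]]+b\otimes[[c,d],a]+c\otimes[d,[a,b]]+d\otimes[[a,b],c]$ and $a\odot b:=a\otimes[b,[a,b]]+b\otimes[[a,b],a]$ (both in $D_2(H)$). $\operatorname{Tr}^{as}:D_2(H)\to\Lambda^2(H/2H)$ is the homomorphism $T(a,b;c,d)\mapsto\omega(a,d)\,b\wedge c+\omega(a,c)\,b\wedge d+\omega(b,d)\,a\wedge c+\omega(b,c)\,a\wedge d$, $a\odot b\mapsto(1+\omega(a,b))\,a\wedge b$ (coefficients mod 2). *)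

theory Defs
  imports Main "HOL-Library.Function_Algebras" "HOL-Library.Z2"
begin

(* H = Z^{2g}: vectors nat => int supported on {..<2g}.
   H^{\<otimes>k} is modelled by k-ary integer arrays supported on {..<2g}^k;
   L(H) sits inside T(H) via [x,y] = x\<otimes>y - y\<otimes>x. *)

type_synonym hvec = "nat \<Rightarrow> int"
type_synonym ten2 = "nat \<Rightarrow> nat \<Rightarrow> int"
type_synonym ten3 = "nat \<Rightarrow> nat \<Rightarrow> nat \<Rightarrow> int"
type_synonym ten4 = "nat \<Rightarrow> nat \<Rightarrow> nat \<Rightarrow> nat \<Rightarrow> int"
(* Lambda^2(H/2H) modelled as alternating F_2-matrices: u\<and>v \<mapsto> (u_p v_q + u_q v_p)_{p,q} *)
type_synonym lam2 = "nat \<Rightarrow> nat \<Rightarrow> bit"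

definition Hg :: "nat \<Rightarrow> hvec set" where
  "Hg g = {x. \<forall>p\<ge>2*g. x p = 0}"

definition evec :: "nat \<Rightarrow> hvec" where
  "evec j = (\<lambda>p. if p = j then 1 else 0)"

definition avec :: "nat \<Rightarrow> hvec" where "avec i = evec i"
definition bvec :: "nat \<Rightarrow> nat \<Rightarrow> hvec" where "bvec g i = evec (g + i)"

definition omega :: "nat \<Rightarrow> hvec \<Rightarrow> hvec \<Rightarrow> int" where
  "omega g x y = (\<Sum>i<g. x i * y (g + i) - x (g + i) * y i)"

inductive_set zspan :: "'a::ab_group_add set \<Rightarrow> 'a set" for S where
  zspan_zero: "0 \<in> zspan S"
| zspan_gen: "x \<in> S \<Longrightarrow> x \<in> zspan S"
| zspan_add: "x \<in> zspan S \<Longrightarrow> y \<in> zspan S \<Longrightarrow> x + y \<in> zspan S"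
| zspan_neg: "x \<in> zspan S \<Longrightarrow> - x \<in> zspan S"

definition br11 :: "hvec \<Rightarrow> hvec \<Rightarrow> ten2" where
  "br11 x y = (\<lambda>p q. x p * y q - y p * x q)"

definition br12 :: "hvec \<Rightarrow> ten2 \<Rightarrow> ten3" where
  "br12 x u = (\<lambda>p q r. x p * u q r - u p q * x r)"

definition br21 :: "ten2 \<Rightarrow> hvec \<Rightarrow> ten3" where
  "br21 u x = (\<lambda>p q r. u p q * x r - x p * u q r)"

definition tens13 :: "hvec \<Rightarrow> ten3 \<Rightarrow> ten4" where
  "tens13 x v = (\<lambda>p q r s. x p * v q r s)"

(* L_3(H) inside H^{\<otimes>3}, H \<otimes> L_3(H) inside H^{\<otimes>4} *)
definition L3 :: "nat \<Rightarrow> ten3 set" where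
  "L3 g = zspan {br12 x (br11 y z) | x y z. x \<in> Hg g \<and> y \<in> Hg g \<and> z \<in> Hg g}"

definition HL3 :: "nat \<Rightarrow> ten4 set" where
  "HL3 g = zspan {tens13 h u | h u. h \<in> Hg g \<and> u \<in> L3 g}"

(* bracket H \<otimes> L_3 \<rightarrow> L_4 \<subseteq> H^{\<otimes>4}, h\<otimes>u \<mapsto> h\<otimes>u - u\<otimes>h *)
definition brk4 :: "ten4 \<Rightarrow> ten4" where
  "brk4 t = (\<lambda>p q r s. t p q r s - t s p q r)"

definition D2 :: "nat \<Rightarrow> ten4 set" where
  "D2 g = {t \<in> HL3 g. brk4 t = 0}"

definition Tel :: "hvec \<Rightarrow> hvec \<Rightarrow> hvec \<Rightarrow> hvec \<Rightarrow> ten4" where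
  "Tel a b c d =
     tens13 a (br12 b (br11 c d)) + tens13 b (br21 (br11 c d) a)
   + tens13 c (br12 d (br11 a b)) + tens13 d (br21 (br11 a b) c)"

definition odot :: "hvec \<Rightarrow> hvec \<Rightarrow> ten4" where
  "odot a b = tens13 a (br12 b (br11 a b)) + tens13 b (br21 (br11 a b) a)"

definition wedge2 :: "hvec \<Rightarrow> hvec \<Rightarrow> lam2" where
  "wedge2 u v = (\<lambda>p q. of_int (u p) * of_int (v q) + of_int (u q) * of_int (v p))"

definition smul2 :: "int \<Rightarrow> lam2 \<Rightarrow> lam2" where
  "smul2 c M = (\<lambda>p q. of_int c * M p q)"

definition is_Tr_as :: "nat \<Rightarrow> (ten4 \<Rightarrow> lam2) \<Rightarrow> bool" where
  "is_Tr_as g tr \<longleftrightarrow>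
     (\<forall>s\<in>D2 g. \<forall>t\<in>D2 g. tr (s + t) = tr s + tr t) \<and>
     (\<forall>a\<in>Hg g. \<forall>b\<in>Hg g. \<forall>c\<in>Hg g. \<forall>d\<in>Hg g.
        tr (Tel a b c d) =
          smul2 (omega g a d) (wedge2 b c) + smul2 (omega g a c) (wedge2 b d)
        + smul2 (omega g b d) (wedge2 a c) + smul2 (omega g b c) (wedge2 a d)) \<and>
     (\<forall>a\<in>Hg g. \<forall>b\<in>Hg g. tr (odot a b) = smul2 (1 + omega g a b) (wedge2 a b))"

definition seven :: "nat \<Rightarrow> nat \<Rightarrow> nat \<Rightarrow> nat \<Rightarrow> nat \<Rightarrow> ten4" where
  "seven g i j k l = Tel (avec i) (avec j) (bvec g k) (avec l)"

definition eight :: "nat \<Rightarrow> nat \<Rightarrow> ten4" where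
  "eight i j = odot (avec i) (avec j)"

definition Ygens :: "nat \<Rightarrow> ten4 set" where
  "Ygens g =
     {Tel (avec i) (avec j) (avec k) (avec l) | i j k l. i < g \<and> j < g \<and> k < g \<and> l < g}
   \<union> {seven g i j k l | i j k l. i < g \<and> j < g \<and> k < g \<and> l < g}
   \<union> {eight i j | i j. i < g \<and> j < g \<and> i \<noteq> j}"

definition Ysub :: "nat \<Rightarrow> ten4 set" where
  "Ysub g = zspan (Ygens g)"

definition Pgens :: "nat \<Rightarrow> ten4 set" where
  "Pgens g =
     {Tel (avec i) (avec j) (avec k) (avec l) | i j k l. i < g \<and> j < g \<and> k < g \<and> l < g}
   \<union> {seven g i j k l | i j k l. i < g \<and> j < g \<and> k < g \<and> l < g \<and> k \<notin> {i, j, l}}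
   \<union> {seven g i k k i | i k. i < g \<and> k < g \<and> i \<noteq> k}
   \<union> {seven g i k k m + seven g m k k i | i k m. i < g \<and> k < g \<and> m < g \<and> i \<noteq> k \<and> m \<noteq> k}
   \<union> {seven g i k k m - seven g m k k i | i k m. i < g \<and> k < g \<and> m < g \<and> i \<noteq> k \<and> m \<noteq> k}
   \<union> {seven g i k k l + seven g i k' k' l | i k k' l. i < g \<and> k < g \<and> k' < g \<and> l < g \<and> i \<notin> {k, k', l}}
   \<union> {seven g i k k l - seven g i k' k' l | i k k' l. i < g \<and> k < g \<and> k' < g \<and> l < g \<and> i \<notin> {k, k', l}}
   \<union> {seven g i k k l + eight i l | i k l. i < g \<and> k < g \<and> l < g \<and> i \<notin> {k, l}}
   \<union> {seven g i k k l - eight i l | i k l. i < g \<and> k < g \<and> l < g \<and> i \<notin> {k, l}}"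

end

theory Submission
  imports Defs
begin

lemma zspan_diff: "x \<in> zspan S \<Longrightarrow> y \<in> zspan S \<Longrightarrow> x - y \<in> zspan S"
  by (metis diff_conv_add_uminus zspan_add zspan_neg)

lemma zspan_sum: "finite A \<Longrightarrow> (\<And>x. x\<in>A \<Longrightarrow> f x \<in> zspan S) \<Longrightarrow> sum f A \<in> zspan S"
  by (induction A rule: finite_induct) (auto intro: zspan.intros)

lemma avec_Hg: "i<g \<Longrightarrow> avec i \<in> Hg g"  unfolding Hg_def avec_def evec_def by auto
lemma bvec_Hg: "i<g \<Longrightarrow> bvec g i \<in> Hg g"  unfolding Hg_def bvec_def evec_def by auto

lemma br21_eq: "br21 u x = - br12 x u" by (rule ext)+ (simp add: br21_def br12_def)
lemma tens13_neg: "tens13 h (- u) = - tens13 h u" by (rule ext)+ (simp add: tens13_def)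

lemma L3_gen: "x\<in>Hg g \<Longrightarrow> y \<in> Hg g \<Longrightarrow> z\<in>Hg g \<Longrightarrow> br12 x (br11 y z) \<in> L3 g"
  unfolding L3_def by (rule zspan_gen) blast
lemma HL3_gen: "h \<in> Hg g \<Longrightarrow> u \<in> L3 g \<Longrightarrow> tens13 h u \<in> HL3 g"
  unfolding HL3_def by (rule zspan_gen) blast
lemma L3_neg: "u \<in> L3 g \<Longrightarrow> - u \<in> L3 g" unfolding L3_def by (rule zspan_neg)
lemma HL3_add: "u \<in> HL3 g \<Longrightarrow> v \<in> HL3 g \<Longrightarrow> u + v \<in> HL3 g" unfolding HL3_def by (rule zspan_add)

lemma brk4_Tel: "brk4 (Tel a b c d) = 0"
  unfolding brk4_def Tel_def tens13_def br12_def br21_def br11_def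
  by (rule ext)+ (simp add: algebra_simps)
lemma brk4_odot: "brk4 (odot a b) = 0"
  unfolding brk4_def odot_def tens13_def br12_def br21_def br11_def
  by (rule ext)+ (simp add: algebra_simps)
lemma Tel_jac: "Tel a b c d = Tel a d c b - Tel b d c a"
  unfolding Tel_def tens13_def br12_def br21_def br11_def
  by (rule ext)+ (simp add: algebra_simps)
lemma Tel_anti: "Tel b a c d = - Tel a b c d"
  unfolding Tel_def tens13_def br12_def br21_def br11_def
  by (rule ext)+ (simp add: algebra_simps)
lemma Tel_same: "Tel a a c d = 0"
  unfolding Tel_def tens13_def br12_def br21_def br11_def
  by (rule ext)+ (simp add: algebra_simps)
lemma odot_sym: "odot b a = odot a b"
  unfolding odot_def tens13_def br12_def br21_def br11_def
  by (rule ext)+ (simp add: algebra_simps)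
lemma odot_self: "odot a a = 0"
  unfolding odot_def tens13_def br12_def br21_def br11_def
  by (rule ext)+ (simp add: algebra_simps)

lemma Tel_D2:
  assumes "a \<in> Hg g" "b \<in> Hg g" "c \<in> Hg g" "d \<in> Hg g"
  shows "Tel a b c d \<in> D2 g"
  unfolding D2_def using assms
  by (simp add: brk4_Tel) (auto simp: Tel_def br21_eq intro!: HL3_add HL3_gen L3_neg L3_gen)

lemma odot_D2:
  assumes "a \<in> Hg g" "b \<in> Hg g"
  shows "odot a b \<in> D2 g"
  unfolding D2_def using assms
  by (simp add: brk4_odot) (auto simp: odot_def br21_eq intro!: HL3_add HL3_gen L3_neg L3_gen)

lemma brk4_add: "brk4 (x + y) = brk4 x + brk4 y" by (rule ext)+ (simp add: brk4_def)
lemma brk4_neg: "brk4 (- x) = - brk4 x" by (rule ext)+ (simp add: brk4_def)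
lemma brk4_zero: "brk4 0 = 0" by (rule ext)+ (simp add: brk4_def)

lemma D2_zero: "0 \<in> D2 g" unfolding D2_def HL3_def by (simp add: brk4_zero zspan_zero)
lemma D2_add: "x \<in> D2 g \<Longrightarrow> y \<in> D2 g \<Longrightarrow> x + y \<in> D2 g"
  unfolding D2_def HL3_def by (simp add: brk4_add zspan_add)
lemma D2_neg: "x \<in> D2 g \<Longrightarrow> - x \<in> D2 g"
  unfolding D2_def HL3_def by (simp add: brk4_neg zspan_neg)

lemma Ygens_D2: "x \<in> Ygens g \<Longrightarrow> x \<in> D2 g"
  unfolding Ygens_def seven_def eight_def
  by (auto intro!: Tel_D2 odot_D2 avec_Hg bvec_Hg)

lemma Ysub_D2: "y \<in> Ysub g \<Longrightarrow> y \<in> D2 g"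
  unfolding Ysub_def
proof (induction rule: zspan.induct)
  case zspan_zero then show ?case by (rule D2_zero)
next
  case (zspan_gen x) then show ?case by (rule Ygens_D2)
next
  case (zspan_add x y) then show ?case using D2_add by blast
next
  case (zspan_neg x) then show ?case using D2_neg by blast
qed

lemma lam2_dbl: "(M::lam2) + M = 0"
  by (rule ext)+ (case_tac "M x xa"; simp)
lemma lam2_neg: "- (M::lam2) = M"
  by (rule ext)+ simp

lemma tr_add: "is_Tr_as g tr \<Longrightarrow> s\<in>D2 g \<Longrightarrow> t\<in>D2 g \<Longrightarrow> tr (s+t) = tr s + tr t"
  unfolding is_Tr_as_def by blast

lemma tr_zero: assumes "is_Tr_as g tr" shows "tr 0 = 0"
proof -
  have "tr 0 = tr 0 + tr 0" using tr_add[OF assms D2_zero D2_zero] by simp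
  then show ?thesis by (simp add: lam2_dbl)
qed

lemma tr_neg: assumes "is_Tr_as g tr" "x \<in> D2 g" shows "tr (- x) = tr x"
proof -
  have "tr 0 = tr x + tr (-x)" using tr_add[OF assms(1) assms(2) D2_neg[OF assms(2)]] by simp
  then have "tr x + tr (-x) = 0" using tr_zero[OF assms(1)] by simp
  then have "tr (-x) = - tr x" by (simp add: add_eq_0_iff)
  then show ?thesis by (simp add: lam2_neg)
qed

lemma tr_diff: assumes "is_Tr_as g tr" "x \<in> D2 g" "y \<in> D2 g" shows "tr (x - y) = tr x + tr y"
  using tr_add[OF assms(1,2) D2_neg[OF assms(3)]] tr_neg[OF assms(1,3)] by simp

lemma omega_aa: "i<g \<Longrightarrow> l<g \<Longrightarrow> omega g (avec i) (avec l) = 0"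
  unfolding omega_def avec_def evec_def by (intro sum.neutral) auto

lemma omega_ab: "i<g \<Longrightarrow> k<g \<Longrightarrow> omega g (avec i) (bvec g k) = (if i=k then 1 else 0)"
proof -
  assume a: "i<g" "k<g"
  have "omega g (avec i) (bvec g k) = (\<Sum>m<g. if m = i then (if i = k then 1 else 0) else 0)"
    unfolding omega_def avec_def bvec_def evec_def using a by (intro sum.cong) auto
  also have "\<dots> = (if i=k then 1 else 0)" using a by simp
  finally show ?thesis .
qed

lemma smul2_0: "smul2 0 M = 0" by (rule ext)+ (simp add: smul2_def)
lemma smul2_1: "smul2 1 M = M" by (rule ext)+ (simp add: smul2_def)
lemma smul2_if: "smul2 (if b then 1 else 0) M = (if b then M else 0)" by (simp add: smul2_0 smul2_1)

lemma bit_sym0: "(a::bit) * b + b * a = 0" by (cases a; cases b; simp)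
lemma bit_dbl: "(a::bit) + a = 0" by (cases a; simp)

lemma wedge_self: "wedge2 u u = 0"
  by (rule ext)+ (simp only: wedge2_def bit_sym0 zero_fun_def)
lemma wedge_sym: "wedge2 u v = wedge2 v u"
  by (rule ext)+ (simp only: wedge2_def mult.commute add.commute)
lemma tr_Tel_a:
  assumes "is_Tr_as g tr" "i<g" "j<g" "k<g" "l<g"
  shows "tr (Tel (avec i) (avec j) (avec k) (avec l)) = 0"
proof -
  have "\<forall>a\<in>Hg g. \<forall>b\<in>Hg g. \<forall>c\<in>Hg g. \<forall>d\<in>Hg g.
        tr (Tel a b c d) =
          smul2 (omega g a d) (wedge2 b c) + smul2 (omega g a c) (wedge2 b d)
        + smul2 (omega g b d) (wedge2 a c) + smul2 (omega g b c) (wedge2 a d)"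
    using assms(1) unfolding is_Tr_as_def by blast
  then show ?thesis using assms by (simp add: avec_Hg omega_aa smul2_0)
qed

lemma tr_seven:
  assumes "is_Tr_as g tr" "i<g" "j<g" "k<g" "l<g"
  shows "tr (seven g i j k l) = (if i=k then wedge2 (avec j) (avec l) else 0)
             + (if j=k then wedge2 (avec i) (avec l) else 0)"
proof -
  have "\<forall>a\<in>Hg g. \<forall>b\<in>Hg g. \<forall>c\<in>Hg g. \<forall>d\<in>Hg g.
        tr (Tel a b c d) =
          smul2 (omega g a d) (wedge2 b c) + smul2 (omega g a c) (wedge2 b d)
        + smul2 (omega g b d) (wedge2 a c) + smul2 (omega g b c) (wedge2 a d)"
    using assms(1) unfolding is_Tr_as_def by blast
  then have "tr (seven g i j k l) =
          smul2 (omega g (avec i) (avec l)) (wedge2 (avec j) (bvec g k)) + smul2 (omega g (avec i) (bvec g k)) (wedge2 (avec j) (avec l))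
        + smul2 (omega g (avec j) (avec l)) (wedge2 (avec i) (bvec g k)) + smul2 (omega g (avec j) (bvec g k)) (wedge2 (avec i) (avec l))"
    using assms unfolding seven_def by (simp add: avec_Hg bvec_Hg)
  also have "\<dots> = (if i=k then wedge2 (avec j) (avec l) else 0)
             + (if j=k then wedge2 (avec i) (avec l) else 0)"
    using assms by (simp add: omega_aa omega_ab smul2_0 smul2_if del: add_bit_eq_xor)
  finally show ?thesis .
qed

lemma tr_eight:
  assumes "is_Tr_as g tr" "i<g" "j<g"
  shows "tr (eight i j) = wedge2 (avec i) (avec j)"
proof -
  have "\<forall>a\<in>Hg g. \<forall>b\<in>Hg g. tr (odot a b) = smul2 (1 + omega g a b) (wedge2 a b)"
    using assms(1) unfolding is_Tr_as_def by blast
  then show ?thesis using assms unfolding eight_def by (simp add: avec_Hg omega_aa smul2_1)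
qed

definition Sm :: "nat \<Rightarrow> lam2 \<Rightarrow> ten4" where
  "Sm g M = (\<Sum>q<g. \<Sum>p<q. if M p q = 1 then eight p q else 0)"

lemma eight_self: "eight i i = 0" unfolding eight_def by (rule odot_self)
lemma eight_sym: "eight j i = eight i j" unfolding eight_def by (rule odot_sym)

lemma eight2_Q: assumes "i<g" "l<g" shows "eight i l + eight i l \<in> zspan (Pgens g)"
proof (cases "i = l")
  case True then show ?thesis by (simp add: eight_self zspan_zero)
next
  case False
  have 1: "seven g i l l l + eight i l \<in> zspan (Pgens g)"
    unfolding Pgens_def using assms False by (intro zspan_gen) blast
  have 2: "seven g i l l l - eight i l \<in> zspan (Pgens g)"
    unfolding Pgens_def using assms False by (intro zspan_gen) blast
  have "eight i l + eight i l = (seven g i l l l + eight i l) - (seven g i l l l - eight i l)"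
    by simp
  then show ?thesis using zspan_diff[OF 1 2] by simp
qed

lemma Sm_zero: "Sm g 0 = 0" unfolding Sm_def by simp

lemma Sm_add: "Sm g (M + N) - Sm g M - Sm g N \<in> zspan (Pgens g)"
proof -
  have "Sm g (M + N) - Sm g M - Sm g N =
     (\<Sum>q<g. \<Sum>p<q. (if (M+N) p q = 1 then eight p q else 0) - (if M p q = 1 then eight p q else 0)
        - (if N p q = 1 then eight p q else 0))"
    unfolding Sm_def by (simp add: sum_subtractf del: add_bit_eq_xor)
  also have "\<dots> \<in> zspan (Pgens g)"
  proof (intro zspan_sum finite_lessThan)
    fix q p assume q: "q \<in> {..<g}" and p: "p \<in> {..<q}"
    have "eight p q + eight p q \<in> zspan (Pgens g)" using p q by (intro eight2_Q) auto
    then have "- (eight p q + eight p q) \<in> zspan (Pgens g)" by (rule zspan_neg)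
    then show "(if (M+N) p q = 1 then eight p q else 0) - (if M p q = 1 then eight p q else 0)
        - (if N p q = 1 then eight p q else 0) \<in> zspan (Pgens g)"
      by (cases "M p q"; cases "N p q"; simp add: zspan_zero)
  qed
  finally show ?thesis .
qed

lemma Sm_dbl: "Sm g M + Sm g M \<in> zspan (Pgens g)"
proof -
  have "- (Sm g M + Sm g M) \<in> zspan (Pgens g)"
    using Sm_add[of g M M] by (simp add: lam2_dbl Sm_zero)
  from zspan_neg[OF this] show ?thesis by simp
qed
lemma wedge_aa_eq1:
  assumes "p < q"
  shows "(wedge2 (avec i) (avec l) p q = 1) \<longleftrightarrow> (p = min i l \<and> q = max i l)"
  using assms unfolding wedge2_def avec_def evec_def
  by (auto simp: min_def max_def)

lemma Sm_wedge:
  assumes "i<g" "l<g"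
  shows "Sm g (wedge2 (avec i) (avec l)) = eight i l"
proof -
  have "Sm g (wedge2 (avec i) (avec l)) =
     (\<Sum>q<g. if q = max i l then (\<Sum>p<q. if p = min i l then eight i l else 0) else 0)"
    unfolding Sm_def
  proof (intro sum.cong refl)
    fix q assume "q \<in> {..<g}"
    show "(\<Sum>p<q. if wedge2 (avec i) (avec l) p q = 1 then eight p q else 0) =
      (if q = max i l then (\<Sum>p<q. if p = min i l then eight i l else 0) else 0)"
      by (auto simp: wedge_aa_eq1 eight_sym min_def max_def intro!: sum.neutral sum.cong)
  qed
  also have "\<dots> = eight i l" using assms
    by (cases "i = l") (auto simp: eight_self min_def max_def)
  finally show ?thesis .
qed
lemma PgA: "i<g \<Longrightarrow> j<g \<Longrightarrow> k<g \<Longrightarrow> l<g \<Longrightarrow> Tel (avec i) (avec j) (avec k) (avec l) \<in> zspan (Pgens g)"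
  unfolding Pgens_def by (intro zspan_gen, rule UnI1, rule UnI1, rule UnI1, rule UnI1, rule UnI1, rule UnI1, rule UnI1, rule UnI1, blast)
lemma Pg7: "i<g \<Longrightarrow> j<g \<Longrightarrow> k<g \<Longrightarrow> l<g \<Longrightarrow> k \<noteq> i \<Longrightarrow> k \<noteq> j \<Longrightarrow> k \<noteq> l \<Longrightarrow> seven g i j k l \<in> zspan (Pgens g)"
  unfolding Pgens_def by (intro zspan_gen, rule UnI1, rule UnI1, rule UnI1, rule UnI1, rule UnI1, rule UnI1, rule UnI1, rule UnI2, blast)
lemma Pgiki: "i<g \<Longrightarrow> k<g \<Longrightarrow> i \<noteq> k \<Longrightarrow> seven g i k k i \<in> zspan (Pgens g)"
  unfolding Pgens_def by (intro zspan_gen, rule UnI1, rule UnI1, rule UnI1, rule UnI1, rule UnI1, rule UnI1, rule UnI2, blast)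
lemma Pgikkm_p: "i<g \<Longrightarrow> k<g \<Longrightarrow> m<g \<Longrightarrow> i \<noteq> k \<Longrightarrow> m \<noteq> k \<Longrightarrow> seven g i k k m + seven g m k k i \<in> zspan (Pgens g)"
  unfolding Pgens_def by (intro zspan_gen, rule UnI1, rule UnI1, rule UnI1, rule UnI1, rule UnI1, rule UnI2, blast)
lemma Pgikkm_m: "i<g \<Longrightarrow> k<g \<Longrightarrow> m<g \<Longrightarrow> i \<noteq> k \<Longrightarrow> m \<noteq> k \<Longrightarrow> seven g i k k m - seven g m k k i \<in> zspan (Pgens g)"
  unfolding Pgens_def by (intro zspan_gen, rule UnI1, rule UnI1, rule UnI1, rule UnI1, rule UnI2, blast)
lemma Pgkk_p: "i<g \<Longrightarrow> k<g \<Longrightarrow> k'<g \<Longrightarrow> l<g \<Longrightarrow> i \<noteq> k \<Longrightarrow> i \<noteq> k' \<Longrightarrow> i \<noteq> l \<Longrightarrow> seven g i k k l + seven g i k' k' l \<in> zspan (Pgens g)"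
  unfolding Pgens_def by (intro zspan_gen, rule UnI1, rule UnI1, rule UnI1, rule UnI2, blast)
lemma Pgkk_m: "i<g \<Longrightarrow> k<g \<Longrightarrow> k'<g \<Longrightarrow> l<g \<Longrightarrow> i \<noteq> k \<Longrightarrow> i \<noteq> k' \<Longrightarrow> i \<noteq> l \<Longrightarrow> seven g i k k l - seven g i k' k' l \<in> zspan (Pgens g)"
  unfolding Pgens_def by (intro zspan_gen, rule UnI1, rule UnI1, rule UnI2, blast)
lemma Pg8_p: "i<g \<Longrightarrow> k<g \<Longrightarrow> l<g \<Longrightarrow> i \<noteq> k \<Longrightarrow> i \<noteq> l \<Longrightarrow> seven g i k k l + eight i l \<in> zspan (Pgens g)"
  unfolding Pgens_def by (intro zspan_gen, rule UnI1, rule UnI2, blast)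
lemma Pg8_m: "i<g \<Longrightarrow> k<g \<Longrightarrow> l<g \<Longrightarrow> i \<noteq> k \<Longrightarrow> i \<noteq> l \<Longrightarrow> seven g i k k l - eight i l \<in> zspan (Pgens g)"
  unfolding Pgens_def by (intro zspan_gen,  rule UnI2, blast)

lemma seven_same: "seven g i i k l = 0" unfolding seven_def by (rule Tel_same)
lemma seven_anti: "seven g k j k l = - seven g j k k l" unfolding seven_def by (rule Tel_anti)
lemma seven_jac: "seven g i j k k = seven g i k k j - seven g j k k i"
  unfolding seven_def by (rule Tel_jac)

lemma seven_case:
  assumes "i<g" "j<g" "k<g" "l<g"
  shows "seven g i j k l - (if i=k then eight j l else 0) - (if j=k then eight i l else 0)
           \<in> zspan (Pgens g)"
proof (cases "i = j")
  case True
  show ?thesis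
  proof (cases "i = k")
    case True
    have "- (eight i l + eight i l) \<in> zspan (Pgens g)"
      using assms by (intro zspan_neg eight2_Q)
    then show ?thesis using True \<open>i = j\<close> by (simp add: seven_same)
  next
    case False then show ?thesis using \<open>i = j\<close> by (simp add: seven_same zspan_zero)
  qed
next
  case ij: False
  show ?thesis
  proof (cases "k = i \<or> k = j")
    case False
    then have ki: "k \<noteq> i" and kj: "k \<noteq> j" by auto
    have "seven g i j k l \<in> zspan (Pgens g)"
    proof (cases "k = l")
      case False
      then show ?thesis using assms ki kj by (intro Pg7)
    next
      case True
      have "seven g i k k j - seven g j k k i \<in> zspan (Pgens g)"
        using assms ki kj by (intro Pgikkm_m) auto
      then show ?thesis using True seven_jac by simp
    qed
    then show ?thesis using ki kj by simp
  next
    case True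
    then show ?thesis
    proof
      assume ki: "k = i"
      then have kj: "j \<noteq> k" using ij by simp
      have "seven g j k k l + eight j l \<in> zspan (Pgens g)"
      proof (cases "l = j")
        case True
        have "seven g j k k j \<in> zspan (Pgens g)"
          using assms ki kj by (intro Pgiki)
        then show ?thesis using True by (simp add: eight_self)
      next
        case False
        then show ?thesis using assms ki kj by (intro Pg8_p) auto
      qed
      from zspan_neg[OF this] show ?thesis using ki kj by (simp add: seven_anti)
    next
      assume kj: "k = j"
      then have ki: "i \<noteq> k" using ij by simp
      have "seven g i k k l - eight i l \<in> zspan (Pgens g)"
      proof (cases "l = i")
        case True
        have "seven g i k k i \<in> zspan (Pgens g)"
          using assms ki kj by (intro Pgiki)
        then show ?thesis using True by (simp add: eight_self)
      next
        case False
        then show ?thesis using assms ki kj by (intro Pg8_m) auto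
      qed
      then show ?thesis using ki kj by simp
    qed
  qed
qed
lemma grp1: "(x::'a::ab_group_add) + y - S = (x - a) + (y - b) - (S - a - b)" by (simp add: algebra_simps)
lemma grp2: "- (x::'a::ab_group_add) - a = - (x - a) - (a + a)" by (simp add: algebra_simps)
lemma grp3: "(x::'a::ab_group_add) - S = (x - a - b) - (S - a - b)" by (simp add: algebra_simps)

lemma Sm_if_wedge: "i<g \<Longrightarrow> l<g \<Longrightarrow>
   Sm g (if b then wedge2 (avec i) (avec l) else 0) = (if b then eight i l else 0)"
  by (simp add: Sm_wedge Sm_zero)

lemma gen_case:
  assumes tr: "is_Tr_as g tr" and x: "x \<in> Ygens g"
  shows "x - Sm g (tr x) \<in> zspan (Pgens g)"
  using x unfolding Ygens_def
proof (elim UnE CollectE exE conjE)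
  fix i j k l assume *: "x = Tel (avec i) (avec j) (avec k) (avec l)" "i < g" "j < g" "k < g" "l < g"
  then show ?thesis using PgA[of i g j k l] tr_Tel_a[OF tr, of i j k l] by (simp add: Sm_zero)
next
  fix i j k l assume *: "x = seven g i j k l" "i < g" "j < g" "k < g" "l < g"
  define A where "A = (if i=k then wedge2 (avec j) (avec l) else 0)"
  define B where "B = (if j=k then wedge2 (avec i) (avec l) else 0)"
  have trx: "tr x = A + B" unfolding A_def B_def using * tr_seven[OF tr] by simp
  have SA: "Sm g A = (if i=k then eight j l else 0)" unfolding A_def using * by (intro Sm_if_wedge)
  have SB: "Sm g B = (if j=k then eight i l else 0)" unfolding B_def using * by (intro Sm_if_wedge)
  have "x - Sm g A - Sm g B \<in> zspan (Pgens g)" using seven_case[of i g j k l] * SA SB by simp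
  note mem = zspan_diff[OF this Sm_add[of g A B]]
  show ?thesis unfolding trx grp3[of x "Sm g (A+B)" "Sm g A" "Sm g B"] by (rule mem)
next
  fix i j assume *: "x = eight i j" "i < g" "j < g" "i \<noteq> j"
  then show ?thesis using tr_eight[OF tr, of i j] Sm_wedge[of i g j] by (simp add: zspan_zero)
qed

lemma main_Y:
  assumes tr: "is_Tr_as g tr" and y: "y \<in> Ysub g"
  shows "y - Sm g (tr y) \<in> zspan (Pgens g)"
  using y unfolding Ysub_def
proof (induction rule: zspan.induct)
  case zspan_zero show ?case unfolding tr_zero[OF tr] Sm_zero diff_zero by (rule zspan.zspan_zero)
next
  case (zspan_gen x) then show ?case by (rule gen_case[OF tr])
next
  case (zspan_add x y)
  have D: "x \<in> D2 g" "y \<in> D2 g" using zspan_add.hyps Ysub_D2 unfolding Ysub_def by auto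
  have mem: "(x - Sm g (tr x)) + (y - Sm g (tr y)) - (Sm g (tr x + tr y) - Sm g (tr x) - Sm g (tr y))
        \<in> zspan (Pgens g)"
    by (rule zspan_diff[OF zspan.zspan_add[OF zspan_add.IH] Sm_add])
  show ?case unfolding tr_add[OF tr D] grp1[of x y "Sm g (tr x + tr y)" "Sm g (tr x)" "Sm g (tr y)"]
    by (rule mem)
next
  case (zspan_neg x)
  have D: "x \<in> D2 g" using zspan_neg.hyps Ysub_D2 unfolding Ysub_def by auto
  have mem: "- (x - Sm g (tr x)) - (Sm g (tr x) + Sm g (tr x)) \<in> zspan (Pgens g)"
    by (rule zspan_diff[OF zspan.zspan_neg[OF zspan_neg.IH] Sm_dbl])
  show ?case unfolding tr_neg[OF tr D] grp2[of x "Sm g (tr x)"] by (rule mem)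
qed
lemma Y_gen: "x \<in> Ygens g \<Longrightarrow> x \<in> Ysub g" unfolding Ysub_def by (rule zspan_gen)
lemma Y_seven: "i<g \<Longrightarrow> j<g \<Longrightarrow> k<g \<Longrightarrow> l<g \<Longrightarrow> seven g i j k l \<in> Ysub g"
  by (rule Y_gen) (unfold Ygens_def, blast)
lemma Y_Tel: "i<g \<Longrightarrow> j<g \<Longrightarrow> k<g \<Longrightarrow> l<g \<Longrightarrow> Tel (avec i) (avec j) (avec k) (avec l) \<in> Ysub g"
  by (rule Y_gen) (unfold Ygens_def, blast)
lemma Y_eight: "i<g \<Longrightarrow> j<g \<Longrightarrow> i \<noteq> j \<Longrightarrow> eight i j \<in> Ysub g"
  by (rule Y_gen) (unfold Ygens_def, blast)
lemma Y_add: "x \<in> Ysub g \<Longrightarrow> y \<in> Ysub g \<Longrightarrow> x + y \<in> Ysub g" unfolding Ysub_def by (rule zspan_add)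
lemma Y_diff: "x \<in> Ysub g \<Longrightarrow> y \<in> Ysub g \<Longrightarrow> x - y \<in> Ysub g" unfolding Ysub_def by (rule zspan_diff)

lemma tr_pm:
  assumes tr: "is_Tr_as g tr" and "x \<in> Ysub g" "y \<in> Ysub g"
  shows "tr (x + y) = tr x + tr y" "tr (x - y) = tr x + tr y"
  using tr_add[OF tr] tr_diff[OF tr] Ysub_D2 assms by auto

lemma lam2_two: "2 * (M::lam2) = 0" by (simp only: mult_2 lam2_dbl)
lemma lam2_dbl': "M = N \<Longrightarrow> (M::lam2) + N = 0" by (simp add: lam2_dbl)

lemma Pgen_ok:
  assumes tr: "is_Tr_as g tr" and x: "x \<in> Pgens g"
  shows "x \<in> Ysub g \<and> tr x = 0"
  using x unfolding Pgens_def
proof (elim UnE CollectE exE conjE)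
  fix i j k l assume *: "x = Tel (avec i) (avec j) (avec k) (avec l)" "i < g" "j < g" "k < g" "l < g"
  then show ?thesis using Y_Tel tr_Tel_a[OF tr] by simp
next
  fix i j k l assume *: "x = seven g i j k l" "i < g" "j < g" "k < g" "l < g" "k \<notin> {i, j, l}"
  then show ?thesis using Y_seven tr_seven[OF tr, of i j k l] by auto
next
  fix i k assume *: "x = seven g i k k i" "i < g" "k < g" "i \<noteq> k"
  then show ?thesis using Y_seven tr_seven[OF tr, of i k k i] by (auto simp: wedge_self)
next
  fix i k m assume *: "x = seven g i k k m + seven g m k k i" "i < g" "k < g" "m < g" "i \<noteq> k" "m \<noteq> k"
  have Y: "seven g i k k m \<in> Ysub g" "seven g m k k i \<in> Ysub g" using * Y_seven by auto
  show ?thesis using * Y Y_add tr_pm[OF tr Y] tr_seven[OF tr, of i k k m] tr_seven[OF tr, of m k k i]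
    by (auto intro!: lam2_dbl' wedge_sym)
next
  fix i k m assume *: "x = seven g i k k m - seven g m k k i" "i < g" "k < g" "m < g" "i \<noteq> k" "m \<noteq> k"
  have Y: "seven g i k k m \<in> Ysub g" "seven g m k k i \<in> Ysub g" using * Y_seven by auto
  show ?thesis using * Y Y_diff tr_pm[OF tr Y] tr_seven[OF tr, of i k k m] tr_seven[OF tr, of m k k i]
    by (auto intro!: lam2_dbl' wedge_sym)
next
  fix i k k' l assume *: "x = seven g i k k l + seven g i k' k' l" "i < g" "k < g" "k' < g" "l < g" "i \<notin> {k, k', l}"
  have Y: "seven g i k k l \<in> Ysub g" "seven g i k' k' l \<in> Ysub g" using * Y_seven by auto
  show ?thesis using * Y Y_add tr_pm[OF tr Y] tr_seven[OF tr, of i k k l] tr_seven[OF tr, of i k' k' l]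
    by (auto intro!: lam2_dbl' simp: lam2_two)
next
  fix i k k' l assume *: "x = seven g i k k l - seven g i k' k' l" "i < g" "k < g" "k' < g" "l < g" "i \<notin> {k, k', l}"
  have Y: "seven g i k k l \<in> Ysub g" "seven g i k' k' l \<in> Ysub g" using * Y_seven by auto
  show ?thesis using * Y Y_diff tr_pm[OF tr Y] tr_seven[OF tr, of i k k l] tr_seven[OF tr, of i k' k' l]
    by (auto intro!: lam2_dbl' simp: lam2_two)
next
  fix i k l assume *: "x = seven g i k k l + eight i l" "i < g" "k < g" "l < g" "i \<notin> {k, l}"
  have Y: "seven g i k k l \<in> Ysub g" "eight i l \<in> Ysub g" using * Y_seven Y_eight by auto
  show ?thesis using * Y Y_add tr_pm[OF tr Y] tr_seven[OF tr, of i k k l] tr_eight[OF tr, of i l]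
    by (auto intro!: lam2_dbl' simp: lam2_two)
next
  fix i k l assume *: "x = seven g i k k l - eight i l" "i < g" "k < g" "l < g" "i \<notin> {k, l}"
  have Y: "seven g i k k l \<in> Ysub g" "eight i l \<in> Ysub g" using * Y_seven Y_eight by auto
  show ?thesis using * Y Y_diff tr_pm[OF tr Y] tr_seven[OF tr, of i k k l] tr_eight[OF tr, of i l]
    by (auto intro!: lam2_dbl' simp: lam2_two)
qed

lemma P_sub:
  assumes tr: "is_Tr_as g tr" and x: "x \<in> zspan (Pgens g)"
  shows "x \<in> Ysub g \<and> tr x = 0"
  using x
proof (induction rule: zspan.induct)
  case zspan_zero show ?case unfolding Ysub_def by (intro conjI zspan.zspan_zero tr_zero[OF tr])
next
  case (zspan_gen x) then show ?case by (rule Pgen_ok[OF tr])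
next
  case (zspan_add x y)
  then have Y: "x \<in> Ysub g" "y \<in> Ysub g" and T: "tr x = 0" "tr y = 0" by blast+
  have "tr (x + y) = 0" unfolding tr_pm(1)[OF tr Y] T by simp
  then show ?case using Y_add[OF Y] by blast
next
  case (zspan_neg x)
  then have Y: "x \<in> Ysub g" and T: "tr x = 0" by blast+
  have "- x \<in> Ysub g" using Y unfolding Ysub_def by (rule zspan.zspan_neg)
  moreover have "tr (- x) = 0" unfolding tr_neg[OF tr Ysub_D2[OF Y]] by (rule T)
  ultimately show ?case by blast
qed

theorem proposition5p7:
  fixes g :: nat and tr :: "ten4 \<Rightarrow> lam2"
  assumes "g \<ge> 2" and "is_Tr_as g tr"
  shows "{y \<in> Ysub g. tr y = 0} = zspan (Pgens g)"
proof
  show "{y \<in> Ysub g. tr y = 0} \<subseteq> zspan (Pgens g)"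
  proof
    fix y assume "y \<in> {y \<in> Ysub g. tr y = 0}"
    then have y: "y \<in> Ysub g" "tr y = 0" by auto
    have "y - Sm g (tr y) \<in> zspan (Pgens g)" by (rule main_Y[OF assms(2) y(1)])
    then show "y \<in> zspan (Pgens g)" unfolding y(2) Sm_zero diff_zero .
  qed
next
  show "zspan (Pgens g) \<subseteq> {y \<in> Ysub g. tr y = 0}"
    using P_sub[OF assms(2)] by blast
qed
end
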